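(* For parameters $\mu\ge 0$, $0\le c\le\mu$, $\sigma\ge 0$, $\eta_s\ge 0$, $\eta_c\ge 0$, let $u_c^*$ be the optimal value of $$\max_{p_0\in\mathbb{R},\,r\in[0,1]}\; p_0+r\mu-c-\eta_c r^2\sigma^2 \quad\text{subject to}\quad (1-r)\mu-p_0-\eta_s(1-r)^2\sigma^2\ge 0,$$ and let $u_{c,r=0}^*$ be the optimal value of the same problem with $r$ fixed to $0$. Then the set $$\mathbb{T}=\{(\mu,c,\eta_s,\eta_c,\sigma):\ u_c^*\ge 0,\ u_{c,r=0}^*<0,\ \mu\ge 0,\ 0\le c\le\mu,\ \eta_s\ge 0,\ \eta_c\ge 0\}$$ is non-empty; that is, there are parameters for which trade occurs when royalties are allowed but not when they are ruled out.
   Context: Interpretation: a creator (cost $c$) sells an NFT at mint price $p_0$ with royalty rate $r$ to a speculator, who resells it at the realized end-buyer valuation $V$ with mean $\mu$ and variance $\sigma^2$; both have mean-variance utility with risk coefficients $\eta_c$ (creator) and $\eta_s$ (speculator); the constraint is the speculator's participation constraint. Trade occurs iff the creator's optimal utility is nonnegative. *)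

theory Defs
  imports "HOL-Analysis.Analysis"
begin

definition creator_util :: "real \<Rightarrow> real \<Rightarrow> real \<Rightarrow> real \<Rightarrow> real \<Rightarrow> real \<Rightarrow> real" where
  "creator_util \<mu> c \<eta>c \<sigma> p0 r = p0 + r * \<mu> - c - \<eta>c * r\<^sup>2 * \<sigma>\<^sup>2"

definition spec_ok :: "real \<Rightarrow> real \<Rightarrow> real \<Rightarrow> real \<Rightarrow> real \<Rightarrow> bool" where
  "spec_ok \<mu> \<eta>s \<sigma> p0 r \<longleftrightarrow> (1 - r) * \<mu> - p0 - \<eta>s * (1 - r)\<^sup>2 * \<sigma>\<^sup>2 \<ge> 0"

definition u_c_star :: "real \<Rightarrow> real \<Rightarrow> real \<Rightarrow> real \<Rightarrow> real \<Rightarrow> real" where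
  "u_c_star \<mu> c \<eta>s \<eta>c \<sigma> =
     Sup {creator_util \<mu> c \<eta>c \<sigma> p0 r | p0 r. r \<in> {0..1} \<and> spec_ok \<mu> \<eta>s \<sigma> p0 r}"

definition u_c_star_r0 :: "real \<Rightarrow> real \<Rightarrow> real \<Rightarrow> real \<Rightarrow> real \<Rightarrow> real" where
  "u_c_star_r0 \<mu> c \<eta>s \<eta>c \<sigma> =
     Sup {creator_util \<mu> c \<eta>c \<sigma> p0 0 | p0. spec_ok \<mu> \<eta>s \<sigma> p0 0}"

end

theory Submission
  imports Defs
begin

theorem corollary3:
  shows "\<exists>\<mu> c \<eta>s \<eta>c \<sigma> :: real.
     \<sigma> \<ge> 0 \<and> \<mu> \<ge> 0 \<and> 0 \<le> c \<and> c \<le> \<mu> \<and> \<eta>s \<ge> 0 \<and> \<eta>c \<ge> 0 \<and>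
     u_c_star \<mu> c \<eta>s \<eta>c \<sigma> \<ge> 0 \<and> u_c_star_r0 \<mu> c \<eta>s \<eta>c \<sigma> < 0"
proof -
  let ?S = "{creator_util 1 (1/2) 0 1 p0 r | p0 r. r \<in> {0..1} \<and> spec_ok 1 1 1 p0 r}"
  let ?T = "{creator_util 1 (1/2) 0 1 p0 0 | p0. spec_ok 1 1 1 p0 0}"
  have bS: "bdd_above ?S"
  proof (rule bdd_aboveI[where M="1/2"])
    fix x assume "x \<in> ?S"
    then obtain p0 r where "x = creator_util 1 (1/2) 0 1 p0 r" "r \<in> {0..1}" "spec_ok 1 1 1 p0 r" by blast
    then show "x \<le> 1/2" unfolding creator_util_def spec_ok_def
      by (simp add: power2_eq_square) (smt (verit) mult_nonneg_nonneg)
  qed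
  have inS: "1/2 \<in> ?S"
    by (rule CollectI, rule exI[where x=0], rule exI[where x=1])
       (simp add: creator_util_def spec_ok_def)
  have "1/2 \<le> Sup ?S" using cSup_upper[OF inS bS] .
  hence h1: "u_c_star 1 (1/2) 1 0 1 \<ge> 0" unfolding u_c_star_def by simp
  have neT: "?T \<noteq> {}"
    by (auto simp: creator_util_def spec_ok_def)
  have "Sup ?T \<le> -1/2"
  proof (rule cSup_least[OF neT])
    fix x assume "x \<in> ?T"
    then show "x \<le> -1/2" by (auto simp: creator_util_def spec_ok_def)
  qed
  hence h2: "u_c_star_r0 1 (1/2) 1 0 1 < 0" unfolding u_c_star_r0_def by simp
  show ?thesis
    by (rule exI[where x=1], rule exI[where x="1/2"], rule exI[where x=1],
        rule exI[where x=0], rule exI[where x=1]) (use h1 h2 in simp)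
qed

end
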